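(* ${\bf K^\boxdot}$ is sound and strongly complete with respect to the class of serial bimodal frames (both $R_1$ and $R_2$ serial): for every $\Gamma\subseteq\mathcal{L}(\boxdot)$ and $\phi\in\mathcal{L}(\boxdot)$, $\Gamma\vdash_{{\bf K^\boxdot}}\phi$ iff $\phi$ is true at every state of every serial bimodal model at which all formulas of $\Gamma$ are true.
   Context: Fix a nonempty set $\mathbf{P}$ of propositional variables. A bimodal model is $\langle S,R_1,R_2,V\rangle$ with $S$ nonempty, $R_1,R_2\subseteq S\times S$, $V:\mathbf{P}\to\mathcal{P}(S)$. $\mathcal{L}(\boxdot):\ \phi::=p\mid\neg\phi\mid(\phi\wedge\phi)\mid\boxdot\phi$. Truth: $\mathcal{M},s\vDash\boxdot\phi$ iff for all $t,u$ with $sR_1t$ and $sR_2u$, ($\mathcal{M},t\vDash\phi\iff\mathcal{M},u\vDash\phi$); atoms and Booleans as usual. ${\bf K^\boxdot}$ has axioms: all instances of propositional tautologies; $\boxdot\top$; $\boxdot\phi\leftrightarrow\boxdot\neg\phi$; $\boxdot\phi\wedge\boxdot\psi\to\boxdot(\phi\wedge\psi)$; $\boxdot\phi\to\boxdot(\phi\vee\psi)\vee\boxdot(\neg\phi\vee\chi)$; and rules: modus ponens and RE: from $\phi\leftrightarrow\psi$ infer $\boxdot\phi\leftrightarrow\boxdot\psi$. *)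

theory Defs
  imports Main
begin

datatype 'p fm = Atom 'p | Neg "'p fm" | Conj "'p fm" "'p fm" | Dot "'p fm"

definition Top :: "'p fm" where "Top = Neg (Conj (Atom undefined) (Neg (Atom undefined)))"
definition Disj :: "'p fm \<Rightarrow> 'p fm \<Rightarrow> 'p fm" where "Disj a b = Neg (Conj (Neg a) (Neg b))"
definition Imp :: "'p fm \<Rightarrow> 'p fm \<Rightarrow> 'p fm" where "Imp a b = Neg (Conj a (Neg b))"
definition Iff :: "'p fm \<Rightarrow> 'p fm \<Rightarrow> 'p fm" where "Iff a b = Conj (Imp a b) (Imp b a)"

text \<open>Propositional (Boolean) valuation semantics, treating Dot-formulas as atoms,
  used to define "instance of a propositional tautology".\<close>
fun peval :: "('p fm \<Rightarrow> bool) \<Rightarrow> 'p fm \<Rightarrow> bool" where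
  "peval v (Atom p) = v (Atom p)"
| "peval v (Neg a) = (\<not> peval v a)"
| "peval v (Conj a b) = (peval v a \<and> peval v b)"
| "peval v (Dot a) = v (Dot a)"

definition taut :: "'p fm \<Rightarrow> bool" where "taut a \<longleftrightarrow> (\<forall>v. peval v a)"

inductive kthm :: "'p fm \<Rightarrow> bool" where
  Tau: "taut a \<Longrightarrow> kthm a"
| DotTop: "kthm (Dot Top)"
| DotNeg: "kthm (Iff (Dot a) (Dot (Neg a)))"
| DotConj: "kthm (Imp (Conj (Dot a) (Dot b)) (Dot (Conj a b)))"
| DotDisj: "kthm (Imp (Dot a) (Disj (Dot (Disj a b)) (Dot (Disj (Neg a) c))))"
| MP: "kthm (Imp a b) \<Longrightarrow> kthm a \<Longrightarrow> kthm b"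
| RE: "kthm (Iff a b) \<Longrightarrow> kthm (Iff (Dot a) (Dot b))"

definition derives :: "'p fm set \<Rightarrow> 'p fm \<Rightarrow> bool" where
  "derives G a \<longleftrightarrow> (\<exists>xs. set xs \<subseteq> G \<and> kthm (foldr Imp xs a))"

fun sat :: "'s set \<Rightarrow> ('s \<Rightarrow> 's \<Rightarrow> bool) \<Rightarrow> ('s \<Rightarrow> 's \<Rightarrow> bool) \<Rightarrow> ('p \<Rightarrow> 's set) \<Rightarrow> 's \<Rightarrow> 'p fm \<Rightarrow> bool" where
  "sat S R1 R2 V s (Atom p) = (s \<in> V p)"
| "sat S R1 R2 V s (Neg a) = (\<not> sat S R1 R2 V s a)"
| "sat S R1 R2 V s (Conj a b) = (sat S R1 R2 V s a \<and> sat S R1 R2 V s b)"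
| "sat S R1 R2 V s (Dot a) = (\<forall>t\<in>S. \<forall>u\<in>S. R1 s t \<longrightarrow> R2 s u \<longrightarrow> (sat S R1 R2 V t a \<longleftrightarrow> sat S R1 R2 V u a))"

definition model :: "'s set \<Rightarrow> ('s \<Rightarrow> 's \<Rightarrow> bool) \<Rightarrow> ('s \<Rightarrow> 's \<Rightarrow> bool) \<Rightarrow> ('p \<Rightarrow> 's set) \<Rightarrow> bool" where
  "model S R1 R2 V \<longleftrightarrow> S \<noteq> {} \<and> (\<forall>s t. R1 s t \<longrightarrow> s \<in> S \<and> t \<in> S)
     \<and> (\<forall>s t. R2 s t \<longrightarrow> s \<in> S \<and> t \<in> S) \<and> (\<forall>p. V p \<subseteq> S)"

definition serial :: "'s set \<Rightarrow> ('s \<Rightarrow> 's \<Rightarrow> bool) \<Rightarrow> bool" where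
  "serial S R \<longleftrightarrow> (\<forall>s\<in>S. \<exists>t\<in>S. R s t)"

definition serial_conseq :: "'s itself \<Rightarrow> 'p fm set \<Rightarrow> 'p fm \<Rightarrow> bool" where
  "serial_conseq _ G a \<longleftrightarrow> (\<forall>(S::'s set) R1 R2 V. model S R1 R2 V \<and> serial S R1 \<and> serial S R2 \<longrightarrow>
      (\<forall>s\<in>S. (\<forall>g\<in>G. sat S R1 R2 V s g) \<longrightarrow> sat S R1 R2 V s a))"

end

theory Submission
  imports Defs
begin

definition Bot :: "'p fm" where "Bot = Neg Top"

lemma pev[simp]:
  "peval v Top"
  "peval v (Bot::'p fm) = False"
  "peval v (Imp a b) = (peval v a \<longrightarrow> peval v b)"
  "peval v (Disj a b) = (peval v a \<or> peval v b)"
  "peval v (Iff a b) = (peval v a = peval v b)"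
  by (auto simp: Top_def Bot_def Imp_def Disj_def Iff_def)

lemma pev_foldr: "peval v (foldr Imp xs a) = ((\<forall>x\<in>set xs. peval v x) \<longrightarrow> peval v a)"
  by (induct xs) auto

lemma pev_conjs: "peval v (foldr Conj xs Top) = (\<forall>x\<in>set xs. peval v x)"
  by (induct xs) auto

lemma sat_simps[simp]:
  "sat S R1 R2 V s Top"
  "sat S R1 R2 V s (Bot::'p fm) = False"
  "sat S R1 R2 V s (Imp a b) = (sat S R1 R2 V s a \<longrightarrow> sat S R1 R2 V s b)"
  "sat S R1 R2 V s (Disj a b) = (sat S R1 R2 V s a \<or> sat S R1 R2 V s b)"
  "sat S R1 R2 V s (Iff a b) = (sat S R1 R2 V s a = sat S R1 R2 V s b)"
  by (auto simp: Top_def Bot_def Imp_def Disj_def Iff_def)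

lemma sat_foldr: "sat S R1 R2 V s (foldr Imp xs a) = ((\<forall>x\<in>set xs. sat S R1 R2 V s x) \<longrightarrow> sat S R1 R2 V s a)"
  by (induct xs) auto

lemma peval_sat: "peval (sat S R1 R2 V s) a = sat S R1 R2 V s a"
  by (induct a) auto

lemma soundness: "kthm a \<Longrightarrow> \<forall>s. sat S R1 R2 V s a"
proof (induct rule: kthm.induct)
  case (Tau a)
  then show ?case by (metis peval_sat taut_def)
next
  case (DotDisj a b c)
  show ?case
  proof
    fix s
    show "sat S R1 R2 V s (Imp (Dot a) (Disj (Dot (Disj a b)) (Dot (Disj (Neg a) c))))"
    proof (cases "(\<exists>t\<in>S. R1 s t) \<and> (\<exists>u\<in>S. R2 s u)")
      case True
      then obtain t0 u0 where t0: "t0\<in>S" "R1 s t0" and u0: "u0 \<in> S" "R2 s u0" by blast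
      show ?thesis
      proof (cases "sat S R1 R2 V t0 a")
        case True
        then show ?thesis using t0 u0 by simp metis
      next
        case False
        then show ?thesis using t0 u0 by simp metis
      qed
    next
      case False
      then show ?thesis by auto
    qed
  qed
qed auto

lemma kthm_chain: "kthm (foldr Imp hs c) \<Longrightarrow> \<forall>h\<in>set hs. kthm h \<Longrightarrow> kthm c"
  by (induct hs) (auto intro: kthm.MP)

lemma taut_rule: "(\<And>v. (\<forall>x\<in>set hs. peval v x) \<Longrightarrow> peval v c) \<Longrightarrow> \<forall>h\<in>set hs. kthm h \<Longrightarrow> kthm c"
  by (rule kthm_chain[of hs c]) (auto intro!: kthm.Tau simp: taut_def pev_foldr)

lemma weaken: "kthm (foldr Imp xs h) \<Longrightarrow> set xs \<subseteq> set ys \<Longrightarrow> kthm (foldr Imp ys h)"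
  by (rule taut_rule[of "[foldr Imp xs h]"]) (auto simp: pev_foldr)

lemma common: "\<forall>h\<in>set hs. derives X h \<Longrightarrow> \<exists>xs. set xs \<subseteq> X \<and> (\<forall>h\<in>set hs. kthm (foldr Imp xs h))"
proof (induct hs)
  case Nil
  then show ?case by (intro exI[of _ "[]"]) simp
next
  case (Cons h hs)
  then obtain ys where ys: "set ys \<subseteq> X" "kthm (foldr Imp ys h)" by (auto simp: derives_def)
  from Cons obtain zs where zs: "set zs \<subseteq> X" "\<forall>h\<in>set hs. kthm (foldr Imp zs h)" by auto
  show ?case
    apply (rule exI[of _ "ys @ zs"])
    using ys zs weaken[of ys h "ys @ zs"] weaken[of zs _ "ys @ zs"]
    by (auto simp del: foldr_append)
qed

lemma derives_rule:
  assumes "\<forall>h\<in>set hs. derives X h" and "\<And>v. (\<forall>x\<in>set hs. peval v x) \<Longrightarrow> peval v c"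
  shows "derives X c"
proof -
  obtain xs where xs: "set xs \<subseteq> X" "\<forall>h\<in>set hs. kthm (foldr Imp xs h)" using common[OF assms(1)] by blast
  have "kthm (foldr Imp xs c)"
    apply (rule taut_rule[of "map (foldr Imp xs) hs"])
    using xs(2) assms(2) by (auto simp: pev_foldr)
  then show ?thesis using xs(1) by (auto simp: derives_def)
qed

lemma mem_derives: "a \<in> X \<Longrightarrow> derives X a"
  unfolding derives_def
  by (rule exI[of _ "[a]"]) (auto intro!: kthm.Tau simp: taut_def)

lemma thm_derives: "kthm a \<Longrightarrow> derives X a"
  unfolding derives_def by (rule exI[of _ "[]"]) simp

lemma deduction: "derives (insert a X) b \<Longrightarrow> derives X (Imp a b)"
proof -
  assume "derives (insert a X) b"
  then obtain xs where xs: "set xs \<subseteq> insert a X" "kthm (foldr Imp xs b)" by (auto simp: derives_def)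
  have "kthm (foldr Imp (filter (\<lambda>x. x \<noteq> a) xs) (Imp a b))"
    apply (rule taut_rule[of "[foldr Imp xs b]"])
    using xs by (auto simp: pev_foldr)
  then show ?thesis using xs(1) unfolding derives_def
    by (intro exI[of _ "filter (\<lambda>x. x \<noteq> a) xs"]) auto
qed

lemma derives_mono: "derives X a \<Longrightarrow> X \<subseteq> Y \<Longrightarrow> derives Y a"
  unfolding derives_def by blast

definition cons :: "'p fm set \<Rightarrow> bool" where "cons X \<longleftrightarrow> \<not> derives X Bot"
definition mcs :: "'p fm set \<Rightarrow> bool" where
  "mcs X \<longleftrightarrow> cons X \<and> (\<forall>a. cons (insert a X) \<longrightarrow> a \<in> X)"

lemma mcs_closed: "mcs X \<Longrightarrow> derives X a \<Longrightarrow> a \<in> X"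
proof -
  assume m: "mcs X" and d: "derives X a"
  have "cons (insert a X)"
  proof (rule ccontr)
    assume "\<not> cons (insert a X)"
    then have "derives X (Imp a Bot)" by (auto simp: cons_def intro: deduction)
    then have "derives X Bot" using d by (intro derives_rule[of "[Imp a Bot, a]"]) auto
    then show False using m by (auto simp: mcs_def cons_def)
  qed
  then show ?thesis using m by (auto simp: mcs_def)
qed

lemma mcs_thm: "mcs X \<Longrightarrow> kthm a \<Longrightarrow> a \<in> X"
  by (simp add: mcs_closed thm_derives)

lemma mcs_neg: "mcs X \<Longrightarrow> (Neg a \<in> X) = (a \<notin> X)"
proof
  assume m: "mcs X" and n: "Neg a \<in> X"
  show "a \<notin> X"
  proof
    assume "a \<in> X"
    then have "derives X Bot" using n by (intro derives_rule[of "[Neg a, a]"]) (auto intro: mem_derives)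
    then show False using m by (auto simp: mcs_def cons_def)
  qed
next
  assume m: "mcs X" and n: "a \<notin> X"
  then have "\<not> cons (insert a X)" by (auto simp: mcs_def)
  then have "derives X (Imp a Bot)" by (auto simp: cons_def intro: deduction)
  then have "derives X (Neg a)" by (intro derives_rule[of "[Imp a Bot]"]) auto
  then show "Neg a \<in> X" using m mcs_closed by blast
qed

lemma mcs_conj: "mcs X \<Longrightarrow> (Conj a b \<in> X) = (a \<in> X \<and> b \<in> X)"
proof safe
  assume m: "mcs X" and c: "Conj a b \<in> X"
  show "a \<in> X" using c by (intro mcs_closed[OF m] derives_rule[of "[Conj a b]"]) (auto intro: mem_derives)
  show "b \<in> X" using c by (intro mcs_closed[OF m] derives_rule[of "[Conj a b]"]) (auto intro: mem_derives)
next
  assume m: "mcs X" and "a \<in> X" "b \<in> X"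
  then show "Conj a b \<in> X" by (intro mcs_closed[OF m] derives_rule[of "[a, b]"]) (auto intro: mem_derives)
qed

lemma mcs_imp: "mcs X \<Longrightarrow> Imp a b \<in> X \<Longrightarrow> a \<in> X \<Longrightarrow> b \<in> X"
  by (auto simp: Imp_def mcs_neg mcs_conj)

lemma mcs_disj: "mcs X \<Longrightarrow> (Disj a b \<in> X) = (a \<in> X \<or> b \<in> X)"
  by (auto simp: Disj_def mcs_neg mcs_conj)

lemma mcs_iff: "mcs X \<Longrightarrow> Iff a b \<in> X \<Longrightarrow> (a \<in> X) = (b \<in> X)"
  by (auto simp: Iff_def mcs_conj intro: mcs_imp)

lemma not_derives_cons: "\<not> derives X a \<Longrightarrow> cons (insert (Neg a) X)"
proof (rule ccontr)
  assume "\<not> derives X a" "\<not> cons (insert (Neg a) X)"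
  then have "derives X (Imp (Neg a) Bot)" by (auto simp: cons_def intro: deduction)
  then have "derives X a" by (intro derives_rule[of "[Imp (Neg a) Bot]"]) auto
  then show False using \<open>\<not> derives X a\<close> by blast
qed

lemma chain_fin: "C \<noteq> {} \<Longrightarrow> (\<forall>x\<in>C. \<forall>y\<in>C. x \<subseteq> y \<or> y \<subseteq> x) \<Longrightarrow> set xs \<subseteq> \<Union>C \<Longrightarrow> \<exists>Y\<in>C. set xs \<subseteq> Y"
proof (induct xs)
  case Nil
  then show ?case by auto
next
  case (Cons x xs)
  then obtain Y where Y: "Y \<in> C" "set xs \<subseteq> Y" by auto
  from Cons obtain Z where Z: "Z \<in> C" "x \<in> Z" by auto
  show ?case using Cons(3)[rule_format, OF Y(1) Z(1)] Y Z by auto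
qed

lemma lindenbaum: "cons X \<Longrightarrow> \<exists>M. X \<subseteq> M \<and> mcs M"
proof -
  assume c: "cons X"
  let ?A = "{Y. X \<subseteq> Y \<and> cons Y}"
  have "\<exists>M\<in>?A. \<forall>Y\<in>?A. M \<subseteq> Y \<longrightarrow> Y = M"
  proof (rule subset_Zorn_nonempty)
    show "?A \<noteq> {}" using c by auto
  next
    fix C assume ne: "C \<noteq> {}" and ch: "subset.chain ?A C"
    have sub: "C \<subseteq> ?A" and lin: "\<forall>x\<in>C. \<forall>y\<in>C. x \<subseteq> y \<or> y \<subseteq> x"
      using ch unfolding subset.chain_def by blast+
    have "cons (\<Union>C)"
      unfolding cons_def
    proof
      assume "derives (\<Union>C) Bot"
      then obtain xs where xs: "set xs \<subseteq> \<Union>C" "kthm (foldr Imp xs Bot)" by (auto simp: derives_def)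
      then obtain Y where "Y \<in> C" "set xs \<subseteq> Y" using chain_fin[OF ne lin] by blast
      then have "derives Y Bot" using xs by (auto simp: derives_def)
      then show False using sub \<open>Y \<in> C\<close> by (auto simp: cons_def)
    qed
    then show "\<Union>C \<in> ?A" using ne sub by auto
  qed
  then obtain M where M: "X \<subseteq> M" "cons M" "\<forall>Y. X \<subseteq> Y \<and> cons Y \<longrightarrow> M \<subseteq> Y \<longrightarrow> Y = M" by auto
  have "mcs M" unfolding mcs_def
  proof (intro conjI allI impI)
    fix a assume "cons (insert a M)"
    then have "insert a M = M" using M(1) M(3)[rule_format, of "insert a M"] by blast
    then show "a \<in> M" by auto
  qed (rule M(2))
  then show ?thesis using M by blast
qed


lemma iffI_taut: "(\<And>v. peval v a = peval v b) \<Longrightarrow> kthm (Iff a b)"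
  by (rule kthm.Tau) (simp add: taut_def)

lemma dot_eq: "mcs s \<Longrightarrow> kthm (Iff a b) \<Longrightarrow> (Dot a \<in> s) = (Dot b \<in> s)"
  by (rule mcs_iff) (auto intro: mcs_thm kthm.RE)

definition U :: "'p fm set \<Rightarrow> 'p fm set" where
  "U s = {a. Dot a \<in> s \<and> (\<forall>b. Dot (Disj a b) \<in> s)}"

lemma U1: "mcs s \<Longrightarrow> Top \<in> U s"
proof -
  assume m: "mcs s"
  have "Dot Top \<in> s" using m kthm.DotTop mcs_thm by blast
  moreover have "Dot (Disj Top b) \<in> s" for b
    using \<open>Dot Top \<in> s\<close> dot_eq[OF m iffI_taut[of Top "Disj Top b"]] by simp
  ultimately show ?thesis by (simp add: U_def)
qed

lemma U2: "mcs s \<Longrightarrow> a \<in> U s \<Longrightarrow> kthm (Imp a c) \<Longrightarrow> c \<in> U s"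
proof -
  assume m: "mcs s" and a: "a \<in> U s" and i: "kthm (Imp a c)"
  have e1: "kthm (Iff (Disj a c) c)" by (rule taut_rule[of "[Imp a c]"]) (use i in auto)
  have e2: "kthm (Iff (Disj a (Disj c b)) (Disj c b))" for b
    by (rule taut_rule[of "[Imp a c]"]) (use i in auto)
  show ?thesis using a dot_eq[OF m e1] dot_eq[OF m e2] by (auto simp: U_def)
qed

lemma U3: "mcs s \<Longrightarrow> a \<in> U s \<Longrightarrow> c \<in> U s \<Longrightarrow> Conj a c \<in> U s"
proof -
  assume m: "mcs s" and a: "a \<in> U s" and c: "c \<in> U s"
  have dc: "Dot x \<in> s \<Longrightarrow> Dot y \<in> s \<Longrightarrow> Dot (Conj x y) \<in> s" for x y
    by (rule mcs_imp[OF m mcs_thm[OF m kthm.DotConj]]) (simp add: mcs_conj[OF m])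
  have e: "kthm (Iff (Conj (Disj a b) (Disj c b)) (Disj (Conj a c) b))" for b
    by (rule iffI_taut) auto
  show ?thesis using a c dc dot_eq[OF m e] by (auto simp: U_def)
qed

lemma U4: "mcs s \<Longrightarrow> Dot a \<in> s \<Longrightarrow> a \<in> U s \<or> Neg a \<in> U s"
proof (cases "a \<in> U s")
  case False
  assume m: "mcs s" and d: "Dot a \<in> s"
  note n = False
  then obtain b where b: "Dot (Disj a b) \<notin> s" using d by (auto simp: U_def)
  have "Dot (Disj (Neg a) c) \<in> s" for c
  proof -
    have "Disj (Dot (Disj a b)) (Dot (Disj (Neg a) c)) \<in> s"
      by (rule mcs_imp[OF m mcs_thm[OF m kthm.DotDisj] d])
    then show ?thesis using b mcs_disj[OF m] by blast
  qed
  moreover have "Dot (Neg a) \<in> s" using d mcs_iff[OF m mcs_thm[OF m kthm.DotNeg]] by blast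
  ultimately show ?thesis by (simp add: U_def)
qed simp

lemma U_conjs: "mcs s \<Longrightarrow> set xs \<subseteq> U s \<Longrightarrow> foldr Conj xs Top \<in> U s"
  by (induct xs) (auto intro: U1 U3)

lemma U5: "mcs s \<Longrightarrow> derives (U s) a \<Longrightarrow> a \<in> U s"
proof -
  assume m: "mcs s" and "derives (U s) a"
  then obtain xs where xs: "set xs \<subseteq> U s" "kthm (foldr Imp xs a)" by (auto simp: derives_def)
  have "kthm (Imp (foldr Conj xs Top) a)"
    by (rule taut_rule[of "[foldr Imp xs a]"]) (use xs in \<open>auto simp: pev_foldr pev_conjs\<close>)
  then show ?thesis using U2[OF m U_conjs[OF m xs(1)]] by blast
qed

definition F :: "'p fm set \<Rightarrow> 'p fm set" where
  "F s = (if Bot \<in> U s then s else U s)"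

lemma F1: "mcs s \<Longrightarrow> cons (F s)"
proof (cases "Bot \<in> U s")
  case True
  assume "mcs s" then show ?thesis using True by (simp add: F_def mcs_def)
next
  case False
  assume m: "mcs s"
  have "\<not> derives (U s) Bot" using U5[OF m] False by blast
  then show ?thesis using False by (simp add: F_def cons_def)
qed

lemma F2: "mcs s \<Longrightarrow> derives (F s) a \<Longrightarrow> a \<in> F s"
proof (cases "Bot \<in> U s")
  case True
  assume "mcs s" "derives (F s) a" then show ?thesis using True mcs_closed by (simp add: F_def)
next
  case False
  assume "mcs s" "derives (F s) a" then show ?thesis using False U5 by (simp add: F_def)
qed

lemma F3: "mcs s \<Longrightarrow> a \<in> F s \<Longrightarrow> Dot a \<in> s"
proof -
  assume m: "mcs s" and a: "a \<in> F s"
  show ?thesis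
  proof (cases "Bot \<in> U s")
    case True
    have "kthm (Imp Bot a)" by (rule kthm.Tau) (simp add: taut_def)
    then have "a \<in> U s" using U2[OF m True] by blast
    then show ?thesis by (simp add: U_def)
  next
    case False
    then have "a \<in> U s" using a by (simp add: F_def)
    then show ?thesis by (simp add: U_def)
  qed
qed

lemma F4: "mcs s \<Longrightarrow> Neg a \<in> F s \<Longrightarrow> Dot a \<in> s"
  using F3 mcs_iff mcs_thm kthm.DotNeg by blast

lemma F5: "mcs s \<Longrightarrow> Dot a \<in> s \<Longrightarrow> a \<in> F s \<or> Neg a \<in> F s"
proof (cases "Bot \<in> U s")
  case True
  assume "mcs s" then show ?thesis using True mcs_neg[of s a] by (simp add: F_def)
next
  case False
  assume "mcs s" "Dot a \<in> s" then show ?thesis using False U4 by (simp add: F_def)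
qed

definition CR :: "'p fm set \<Rightarrow> 'p fm set \<Rightarrow> bool" where
  "CR s t \<longleftrightarrow> mcs s \<and> mcs t \<and> F s \<subseteq> t"

definition CV :: "'p \<Rightarrow> 'p fm set set" where
  "CV p = {X. mcs X \<and> Atom p \<in> X}"

lemma truth: "mcs s \<Longrightarrow> sat {X. mcs X} CR CR CV s a = (a \<in> s)"
proof (induct a arbitrary: s)
  case (Atom p)
  then show ?case by (simp add: CV_def)
next
  case (Neg a)
  then show ?case by (simp add: mcs_neg)
next
  case (Conj a b)
  then show ?case by (simp add: mcs_conj)
next
  case (Dot a)
  note m = Dot(2)
  show ?case
  proof
    assume sa: "sat {X. mcs X} CR CR CV s (Dot a)"
    show "Dot a \<in> s"
    proof (rule ccontr)
      assume n: "Dot a \<notin> s"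
      have n1: "\<not> derives (F s) a" using n F2[OF m] F3[OF m] by blast
      have n2: "\<not> derives (F s) (Neg a)" using n F2[OF m] F4[OF m] by blast
      obtain t where t: "insert (Neg a) (F s) \<subseteq> t" "mcs t"
        using lindenbaum[OF not_derives_cons[OF n1]] by blast
      obtain u where u: "insert (Neg (Neg a)) (F s) \<subseteq> u" "mcs u"
        using lindenbaum[OF not_derives_cons[OF n2]] by blast
      have "CR s t" "CR s u" using t u m by (auto simp: CR_def)
      then have "sat {X. mcs X} CR CR CV t a = sat {X. mcs X} CR CR CV u a"
        using sa t(2) u(2) unfolding sat.simps(4) mem_Collect_eq by blast
      then have "(a \<in> t) = (a \<in> u)" using Dot(1)[OF t(2)] Dot(1)[OF u(2)] by blast
      moreover have "a \<notin> t" using t mcs_neg by blast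
      moreover have "a \<in> u" using u mcs_neg by blast
      ultimately show False by blast
    qed
  next
    assume d: "Dot a \<in> s"
    show "sat {X. mcs X} CR CR CV s (Dot a)"
    unfolding sat.simps(4)
    proof (intro ballI impI)
      fix t u assume "t \<in> {X. mcs X}" "u \<in> {X. mcs X}" "CR s t" "CR s u"
      then have "mcs t" "mcs u" by auto
      have tu: "F s \<subseteq> t" "F s \<subseteq> u" using \<open>CR s t\<close> \<open>CR s u\<close> by (auto simp: CR_def)
      have "(a \<in> t) = (a \<in> u)"
        using F5[OF m d] tu mcs_neg[OF \<open>mcs t\<close>] mcs_neg[OF \<open>mcs u\<close>] by blast
      then show "sat {X. mcs X} CR CR CV t a = sat {X. mcs X} CR CR CV u a"
        using Dot(1)[OF \<open>mcs t\<close>] Dot(1)[OF \<open>mcs u\<close>] by blast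
    qed
  qed
qed

lemma sound_conseq: "derives G a \<Longrightarrow> serial_conseq TYPE('s) G a"
  unfolding derives_def serial_conseq_def
proof (intro allI impI ballI)
  fix S :: "'s set" and R1 R2 V s
  assume "\<exists>xs. set xs \<subseteq> G \<and> kthm (foldr Imp xs a)" and "\<forall>g\<in>G. sat S R1 R2 V s g"
  then obtain xs where "set xs \<subseteq> G" "kthm (foldr Imp xs a)" by blast
  then have "sat S R1 R2 V s (foldr Imp xs a)" using soundness[of "foldr Imp xs a" S R1 R2 V] by blast
  then show "sat S R1 R2 V s a" using \<open>set xs \<subseteq> G\<close> \<open>\<forall>g\<in>G. sat S R1 R2 V s g\<close>
    by (auto simp: sat_foldr)
qed

lemma complete: "serial_conseq TYPE('p fm set) (G::'p fm set) a \<Longrightarrow> derives G a"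
proof (rule ccontr)
  assume sc: "serial_conseq TYPE('p fm set) (G::'p fm set) a" and nd: "\<not> derives G a"
  obtain M where M: "insert (Neg a) G \<subseteq> M" "mcs M"
    using lindenbaum[OF not_derives_cons[OF nd]] by blast
  have mod: "model {X::'p fm set. mcs X} CR CR CV"
  proof -
    have "{X::'p fm set. mcs X} \<noteq> {}" using M(2) by (metis empty_iff mem_Collect_eq)
    moreover have "\<forall>s t. CR s t \<longrightarrow> s \<in> {X::'p fm set. mcs X} \<and> t \<in> {X::'p fm set. mcs X}" by (simp add: CR_def)
    moreover have "\<forall>p. CV p \<subseteq> {X::'p fm set. mcs X}" by (auto simp: CV_def)
    ultimately show ?thesis by (simp add: model_def)
  qed
  have ser: "serial {X::'p fm set. mcs X} CR"
    unfolding serial_def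
  proof
    fix s assume "s \<in> {X::'p fm set. mcs X}"
    then have m: "mcs s" by simp
    obtain t where "F s \<subseteq> t" "mcs t" using lindenbaum[OF F1[OF m]] by blast
    then show "\<exists>t\<in>{X::'p fm set. mcs X}. CR s t" using m by (auto simp: CR_def)
  qed
  have "\<forall>g\<in>G. sat {X::'p fm set. mcs X} CR CR CV M g" using M(1) truth[OF M(2)] by auto
  moreover have "M \<in> {X::'p fm set. mcs X}" using M(2) by simp
  ultimately have "sat {X::'p fm set. mcs X} CR CR CV M a"
    using sc[unfolded serial_conseq_def, rule_format, of "{X::'p fm set. mcs X}" CR CR CV M] mod ser by blast
  then have "a \<in> M" using truth[OF M(2)] by blast
  moreover have "Neg a \<in> M" using M by blast
  ultimately show False using mcs_neg[OF M(2), of a] by blast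
qed

theorem mainTheorem11:
  fixes G :: "'p fm set" and a :: "'p fm"
  shows "(derives G a \<longrightarrow> serial_conseq TYPE('s) G a)
       \<and> (derives G a \<longleftrightarrow> serial_conseq TYPE('p fm set) G a)"
proof (intro conjI impI iffI)
  show "derives G a \<Longrightarrow> serial_conseq TYPE('s) G a" by (rule sound_conseq)
  show "derives G a \<Longrightarrow> serial_conseq TYPE('p fm set) G a" by (rule sound_conseq)
  show "serial_conseq TYPE('p fm set) G a \<Longrightarrow> derives G a" by (rule complete)
qed

end
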